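(* Let $q\ge2$ and let $\phi:\mathbb R\to\mathbb R$ be bounded below, differentiable and non-increasing, with $\phi'(0)<0$ and $\phi(t)+\phi(-t)=2\phi(0)$ for all $t\in\mathbb R$. Then the surrogate $\mathcal L_r$ (whose noisy counterpart is the modified loss $\tilde{\mathcal L}_r$) is consistent with respect to the ranking loss $L_r$: there exists a nondecreasing concave function $\xi:[0,\infty)\to[0,\infty)$ with $\xi(0)=0$ and $\xi(t)\to0$ as $t\downarrow0$ such that for every distribution $\mathcal D$ on $\mathcal X\times\{-1,+1\}^q$ and every measurable $\mathbf f:\mathcal X\to\mathbb R^q$, $$R_{L_r}(\mathbf f)-R^*_{L_r}\le\xi\big(R_{\mathcal L_r}(\mathbf f)-R^*_{\mathcal L_r}\big).$$
   Context: Fix a feature space $\mathcal X$, $(x,\mathbf y)\sim\mathcal D$ with $\mathbf y\in\{-1,+1\}^q$, and $\mathbf f=(f_1,\dots,f_q)$. Surrogate: $\mathcal L_r(\mathbf f(x),\mathbf y)=\sum_{1\le j<k\le q}[\mathbb 1(y_j=+1,y_k=-1)\phi(f_j(x)-f_k(x))+\mathbb 1(y_j=-1,y_k=+1)\phi(f_k(x)-f_j(x))]$. Ranking loss: $L_r(\mathbf f(x),\mathbf y)=\sum_{1\le j<k\le q}[\mathbb 1(y_j<y_k)\ell(j,k)+\mathbb 1(y_j>y_k)\ell(k,j)]$ with $\ell(j,k)=\mathbb 1(f_j(x)>f_k(x))+\tfrac12\mathbb 1(f_j(x)=f_k(x))$. Risks $R_L(\mathbf f)=\mathbb E_{\mathcal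 D}[L(\mathbf f(x),\mathbf y)]$ and $R^*_L=\inf_{\mathbf g}R_L(\mathbf g)$ over measurable $\mathbf g:\mathcal X\to\mathbb R^q$, for $L\in\{L_r,\mathcal L_r\}$. (The modified loss $\tilde{\mathcal L}_r$ is the noise-corrected pairwise loss satisfying $\mathbb E_{\tilde{\mathbf y}\mid\mathbf y}[\tilde{\mathcal L}_r(\mathbf t,\tilde{\mathbf y})]=\mathcal L_r(\mathbf t,\mathbf y)$ under class-conditional independent label flips.) *)

theory Defs
  imports "HOL-Probability.Probability"
begin

definition label_space :: "nat \<Rightarrow> (nat \<Rightarrow> int) set" where
  "label_space q = {y. (\<forall>j<q. y j = -1 \<or> y j = 1) \<and> (\<forall>j\<ge>q. y j = 0)}"

definition ell :: "(nat \<Rightarrow> real) \<Rightarrow> nat \<Rightarrow> nat \<Rightarrow> real" where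
  "ell t j k = (if t j > t k then 1 else 0) + (if t j = t k then 1/2 else 0)"

definition rank_loss :: "nat \<Rightarrow> (nat \<Rightarrow> real) \<Rightarrow> (nat \<Rightarrow> int) \<Rightarrow> real" where
  "rank_loss q t y = (\<Sum>j<q. \<Sum>k\<in>{j<..<q}.
      (if y j < y k then ell t j k else 0) + (if y j > y k then ell t k j else 0))"

definition surr_loss :: "(real \<Rightarrow> real) \<Rightarrow> nat \<Rightarrow> (nat \<Rightarrow> real) \<Rightarrow> (nat \<Rightarrow> int) \<Rightarrow> real" where
  "surr_loss \<phi> q t y = (\<Sum>j<q. \<Sum>k\<in>{j<..<q}.
      (if y j = 1 \<and> y k = -1 then \<phi> (t j - t k) else 0)
    + (if y j = -1 \<and> y k = 1 then \<phi> (t k - t j) else 0))"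

definition scorers :: "'x measure \<Rightarrow> nat \<Rightarrow> ('x \<Rightarrow> nat \<Rightarrow> real) set" where
  "scorers M q = {f. \<forall>j<q. (\<lambda>x. f x j) \<in> borel_measurable M}"

definition risk :: "('x \<times> (nat \<Rightarrow> int)) measure \<Rightarrow> ((nat \<Rightarrow> real) \<Rightarrow> (nat \<Rightarrow> int) \<Rightarrow> real)
    \<Rightarrow> ('x \<Rightarrow> nat \<Rightarrow> real) \<Rightarrow> real" where
  "risk D L f = (\<integral>z. L (f (fst z)) (snd z) \<partial>D)"

definition bayes_risk :: "'x measure \<Rightarrow> nat \<Rightarrow> ('x \<times> (nat \<Rightarrow> int)) measure
    \<Rightarrow> ((nat \<Rightarrow> real) \<Rightarrow> (nat \<Rightarrow> int) \<Rightarrow> real) \<Rightarrow> real" where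
  "bayes_risk M q D L = (INF g \<in> scorers M q. risk D L g)"

end

theory Submission
  imports Defs
begin


lemma transfer:
  fixes D :: "('x \<times> (nat \<Rightarrow> int)) measure" and M :: "'x measure"
  assumes D: "prob_space D" and S: "sets D = sets (M \<Otimes>\<^sub>M count_space L)"
    and Lj: "\<forall>y\<in>L. y j = 1 \<or> y j = -1"
  shows "\<exists>\<eta> \<in> borel_measurable M. \<forall>h \<in> borel_measurable M. (\<exists>B. \<forall>x. \<bar>h x\<bar> \<le> B) \<longrightarrow>
     integrable D (\<lambda>z. \<eta> (fst z) * h (fst z)) \<and>
     (\<integral>z. real_of_int (snd z j) * h (fst z) \<partial>D) = (\<integral>z. \<eta> (fst z) * h (fst z) \<partial>D)"
proof -
  interpret D: prob_space D by fact
  have sp: "space D = space M \<times> L"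
    using sets_eq_imp_space_eq[OF S] by (simp add: space_pair_measure)
  have mfst[measurable]: "fst \<in> measurable D M"
    by (subst measurable_cong_sets[OF S refl]) simp
  have msnd[measurable]: "snd \<in> measurable D (count_space L)"
    by (subst measurable_cong_sets[OF S refl]) simp
  define g :: "'x \<times> (nat \<Rightarrow> int) \<Rightarrow> real" where "g z = (if snd z j = 1 then 1 else 0)" for z
  have mg[measurable]: "g \<in> borel_measurable D"
  proof -
    have "(\<lambda>y. if y j = 1 then 1 else (0::real)) \<in> borel_measurable (count_space L)" by simp
    from measurable_comp[OF msnd this] show ?thesis by (simp add: g_def[abs_def] o_def)
  qed
  define \<mu> where "\<mu> = distr D M fst"
  define N where "N = distr (density D (\<lambda>z. ennreal (g z))) M fst"
  interpret mu: prob_space \<mu> unfolding \<mu>_def by (rule D.prob_space_distr) simp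
  have sN: "sets N = sets \<mu>" by (simp add: N_def \<mu>_def)
  have mfst': "fst \<in> measurable (density D (\<lambda>z. ennreal (g z))) M" by simp
  have embound: "emeasure N A \<le> emeasure \<mu> A" if A: "A \<in> sets M" for A
  proof -
    have "emeasure N A = emeasure (density D (\<lambda>z. ennreal (g z))) (fst -` A \<inter> space D)"
      unfolding N_def using A by (subst emeasure_distr) auto
    also have "\<dots> = (\<integral>\<^sup>+z. ennreal (g z) * indicator (fst -` A \<inter> space D) z \<partial>D)"
      using A mfst by (subst emeasure_density) (auto)
    also have "\<dots> \<le> (\<integral>\<^sup>+z. indicator (fst -` A \<inter> space D) z \<partial>D)"
      by (intro nn_integral_mono) (auto simp: g_def indicator_def)
    also have "\<dots> = emeasure D (fst -` A \<inter> space D)"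
      using A mfst by (intro nn_integral_indicator) auto
    also have "\<dots> = emeasure \<mu> A" unfolding \<mu>_def using A by (subst emeasure_distr) auto
    finally show ?thesis .
  qed
  have ac: "absolutely_continuous \<mu> N"
    unfolding absolutely_continuous_def
  proof
    fix A assume "A \<in> null_sets \<mu>"
    then have A: "A \<in> sets M" "emeasure \<mu> A = 0" by (auto simp: \<mu>_def)
    then show "A \<in> null_sets N" using embound[OF A(1)] sN by (auto simp: \<mu>_def)
  qed
  interpret Nf: finite_measure N
  proof
    have "emeasure N (space N) \<le> emeasure \<mu> (space \<mu>)"
      using embound[of "space M"] by (simp add: N_def \<mu>_def)
    then show "emeasure N (space N) \<noteq> \<infinity>" using mu.emeasure_space_1 by (auto simp: top_unique)
  qed
  define p where "p x = enn2real (RN_deriv \<mu> N x)" for x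
  have mp[measurable]: "p \<in> borel_measurable M"
    unfolding p_def using borel_measurable_RN_deriv[of \<mu> N] by (simp add: \<mu>_def)
  define \<eta> where "\<eta> x = 2 * p x - 1" for x
  have m\<eta>: "\<eta> \<in> borel_measurable M" unfolding \<eta>_def by simp
  show ?thesis
  proof (intro bexI[OF _ m\<eta>] ballI impI conjI)
    fix h :: "'x \<Rightarrow> real" assume mh[measurable]: "h \<in> borel_measurable M" and "\<exists>B. \<forall>x. \<bar>h x\<bar> \<le> B"
    then obtain B where B: "\<And>x. \<bar>h x\<bar> \<le> B" by auto
    have mh': "h \<in> borel_measurable \<mu>" by (simp add: \<mu>_def)
    have intN: "integrable N h"
      by (rule Nf.integrable_const_bound[where B=B]) (use B sN in \<open>auto simp: \<mu>_def N_def\<close>)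
    have sf: "sigma_finite_measure N" by unfold_locales
    have "integrable \<mu> (\<lambda>x. p x * h x)"
      using mu.RN_deriv_integrable[OF sf ac sN mh'] intN by (simp add: p_def)
    then have int1: "integrable D (\<lambda>z. p (fst z) * h (fst z))"
      unfolding \<mu>_def by (subst (asm) integrable_distr_eq) auto
    have inth: "integrable D (\<lambda>z. h (fst z))"
      by (rule D.integrable_const_bound[where B=B]) (use B in auto)
    have intg: "integrable D (\<lambda>z. g z * h (fst z))"
    proof (rule D.integrable_const_bound[where B=B])
      have B0: "0 \<le> B" using B[of undefined] by linarith
      show "AE z in D. norm (g z * h (fst z)) \<le> B"
        by (intro AE_I2) (auto simp: g_def B B0)
    qed simp
    have "integral\<^sup>L N h = (\<integral>x. p x * h x \<partial>\<mu>)"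
      using mu.RN_deriv_integral[OF sf ac sN mh'] by (simp add: p_def)
    also have "\<dots> = (\<integral>z. p (fst z) * h (fst z) \<partial>D)"
      unfolding \<mu>_def by (subst integral_distr) auto
    finally have e1: "integral\<^sup>L N h = (\<integral>z. p (fst z) * h (fst z) \<partial>D)" .
    have "integral\<^sup>L N h = integral\<^sup>L (density D (\<lambda>z. ennreal (g z))) (\<lambda>z. h (fst z))"
      unfolding N_def by (subst integral_distr) auto
    also have "\<dots> = (\<integral>z. g z * h (fst z) \<partial>D)"
      by (subst integral_density) (auto simp: g_def)
    finally have e2: "integral\<^sup>L N h = (\<integral>z. g z * h (fst z) \<partial>D)" .
    have "(\<integral>z. real_of_int (snd z j) * h (fst z) \<partial>D) = (\<integral>z. 2 * (g z * h (fst z)) - h (fst z) \<partial>D)"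
    proof (intro Bochner_Integration.integral_cong refl)
      fix z assume "z \<in> space D"
      then have "snd z \<in> L" by (auto simp: sp)
      then show "real_of_int (snd z j) * h (fst z) = 2 * (g z * h (fst z)) - h (fst z)"
        using Lj by (auto simp: g_def)
    qed
    also have "\<dots> = 2 * (\<integral>z. g z * h (fst z) \<partial>D) - (\<integral>z. h (fst z) \<partial>D)"
      using intg inth by simp
    also have "\<dots> = 2 * (\<integral>z. p (fst z) * h (fst z) \<partial>D) - (\<integral>z. h (fst z) \<partial>D)"
      using e1 e2 by simp
    also have "\<dots> = (\<integral>z. 2 * (p (fst z) * h (fst z)) - h (fst z) \<partial>D)"
      using int1 inth by simp
    also have "\<dots> = (\<integral>z. \<eta> (fst z) * h (fst z) \<partial>D)"
      by (intro Bochner_Integration.integral_cong refl) (auto simp: \<eta>_def algebra_simps)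
    finally show "(\<integral>z. real_of_int (snd z j) * h (fst z) \<partial>D) = (\<integral>z. \<eta> (fst z) * h (fst z) \<partial>D)" .
    have "integrable D (\<lambda>z. 2 * (p (fst z) * h (fst z)) - h (fst z))" using int1 inth by simp
    then show "integrable D (\<lambda>z. \<eta> (fst z) * h (fst z))"
      by (simp add: \<eta>_def algebra_simps)
  qed
qed



lemma rank_eq:
  assumes "y \<in> label_space q"
  shows "rank_loss q t y = (\<Sum>j<q. \<Sum>k\<in>{j<..<q}.
     (if y j \<noteq> y k then 1/2 else 0) + real_of_int (y j - y k) * (- sgn (t j - t k) / 4))"
  unfolding rank_loss_def
proof (intro sum.cong refl)
  fix j k assume j: "j \<in> {..<q}" and k: "k \<in> {j<..<q}"
  have jq: "j < q" "k < q" using j k by auto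
  have yj: "y j = 1 \<or> y j = -1" and yk: "y k = 1 \<or> y k = -1"
    using assms(1) jq unfolding label_space_def by auto
  show "(if y j < y k then ell t j k else 0) + (if y k < y j then ell t k j else 0) =
     (if y j \<noteq> y k then 1/2 else 0) + real_of_int (y j - y k) * (- sgn (t j - t k) / 4)"
    using yj yk by (cases "t j > t k"; cases "t j = t k"; auto simp: ell_def sgn_if)
qed

lemma surr_eq:
  assumes "y \<in> label_space q" and sym: "\<And>t. \<phi> t + \<phi> (- t) = 2 * \<phi> 0"
  shows "surr_loss \<phi> q t y = (\<Sum>j<q. \<Sum>k\<in>{j<..<q}.
     (if y j \<noteq> y k then \<phi> 0 else 0) + real_of_int (y j - y k) * ((\<phi> (t j - t k) - \<phi> 0) / 2))"
  unfolding surr_loss_def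
proof (intro sum.cong refl)
  fix j k assume j: "j \<in> {..<q}" and k: "k \<in> {j<..<q}"
  have jq: "j < q" "k < q" using j k by auto
  have yj: "y j = 1 \<or> y j = -1" and yk: "y k = 1 \<or> y k = -1"
    using assms(1) jq unfolding label_space_def by auto
  have s: "\<phi> (t k - t j) = 2 * \<phi> 0 - \<phi> (t j - t k)"
    using sym[of "t j - t k"] by simp
  show "(if y j = 1 \<and> y k = - 1 then \<phi> (t j - t k) else 0) +
        (if y j = - 1 \<and> y k = 1 then \<phi> (t k - t j) else 0) =
     (if y j \<noteq> y k then \<phi> 0 else 0) + real_of_int (y j - y k) * ((\<phi> (t j - t k) - \<phi> 0) / 2)"
    using yj yk s by (elim disjE) (auto simp: field_simps)
qed

lemma decomp:
  fixes D :: "('x \<times> (nat \<Rightarrow> int)) measure" and M :: "'x measure"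
    and \<Delta> :: "nat \<Rightarrow> nat \<Rightarrow> 'x \<Rightarrow> real"
  assumes D: "prob_space D" and S: "sets D = sets (M \<Otimes>\<^sub>M count_space (label_space q))"
    and Tr2: "\<And>j k h. j < q \<Longrightarrow> k < q \<Longrightarrow> h \<in> borel_measurable M \<Longrightarrow> (\<exists>B. \<forall>x. \<bar>h x\<bar> \<le> B) \<Longrightarrow>
        (\<integral>z. real_of_int (snd z j - snd z k) * h (fst z) \<partial>D) = (\<integral>z. \<Delta> j k (fst z) * h (fst z) \<partial>D)"
    and Hm: "H \<in> borel_measurable borel" and Hb: "\<And>d. \<bar>H d\<bar> \<le> CH"
    and Bb: "\<And>j k y. \<bar>B j k y\<bar> \<le> CB"
    and Lo: "\<And>t y. y \<in> label_space q \<Longrightarrow> Loss t y = (\<Sum>j<q. \<Sum>k\<in>{j<..<q}.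
               B j k y + real_of_int (y j - y k) * H (t j - t k))"
    and g: "g \<in> scorers M q"
  shows "risk D Loss g = (\<Sum>j<q. \<Sum>k\<in>{j<..<q}. \<integral>z. B j k (snd z) \<partial>D)
     + (\<Sum>j<q. \<Sum>k\<in>{j<..<q}. \<integral>z. \<Delta> j k (fst z) * H (g (fst z) j - g (fst z) k) \<partial>D)"
proof -
  interpret D: prob_space D by fact
  have sp: "space D = space M \<times> label_space q"
    using sets_eq_imp_space_eq[OF S] by (simp add: space_pair_measure)
  have mfst[measurable]: "fst \<in> measurable D M"
    by (subst measurable_cong_sets[OF S refl]) simp
  have msnd[measurable]: "snd \<in> measurable D (count_space (label_space q))"
    by (subst measurable_cong_sets[OF S refl]) simp
  have ms: "(\<lambda>z. F (snd z)) \<in> borel_measurable D" for F :: "(nat \<Rightarrow> int) \<Rightarrow> real"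
    using measurable_comp[OF msnd measurable_count_space_eq1[of F "label_space q" borel, THEN iffD2]] by (simp add: o_def)
  have mf: "F \<in> borel_measurable M \<Longrightarrow> (\<lambda>z. F (fst z)) \<in> borel_measurable D" for F :: "'x \<Rightarrow> real"
    using measurable_comp[OF mfst] by (simp add: o_def)
  have mgj: "(\<lambda>x. g x j) \<in> borel_measurable M" if "j < q" for j
    using g that by (simp add: scorers_def)
  have mh: "(\<lambda>x. H (g x j - g x k)) \<in> borel_measurable M" if "j < q" "k < q" for j k
    using measurable_compose[OF borel_measurable_diff[OF mgj[OF that(1)] mgj[OF that(2)]] Hm] .
  have yv: "snd z j = 1 \<or> snd z j = -1" if "z \<in> space D" "j < q" for z j
    using that by (auto simp: sp label_space_def)
  have CB0: "0 \<le> CB" using Bb[of 0 0 undefined] by linarith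
  have CH0: "0 \<le> CH" using Hb[of 0] by linarith
  have intB: "integrable D (\<lambda>z. B j k (snd z))" for j k
    by (rule D.integrable_const_bound[where B=CB]) (auto intro!: AE_I2 Bb ms)
  have intY: "integrable D (\<lambda>z. real_of_int (snd z j - snd z k) * H (g (fst z) j - g (fst z) k))"
    if "j < q" "k < q" for j k
  proof (rule D.integrable_const_bound[where B="2*CH"])
    show "AE z in D. norm (real_of_int (snd z j - snd z k) * H (g (fst z) j - g (fst z) k)) \<le> 2 * CH"
    proof (intro AE_I2)
      fix z assume z: "z \<in> space D"
      have "\<bar>real_of_int (snd z j - snd z k)\<bar> \<le> 2" using yv[OF z that(1)] yv[OF z that(2)] by auto
      then show "norm (real_of_int (snd z j - snd z k) * H (g (fst z) j - g (fst z) k)) \<le> 2 * CH"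
        using Hb[of "g (fst z) j - g (fst z) k"] CH0 by (simp add: abs_mult mult_mono)
    qed
    show "(\<lambda>z. real_of_int (snd z j - snd z k) * H (g (fst z) j - g (fst z) k)) \<in> borel_measurable D"
      using ms[of "\<lambda>y. real_of_int (y j - y k)"] mf[OF mh[OF that]] by (intro borel_measurable_times) auto
  qed
  have "risk D Loss g = (\<integral>z. (\<Sum>j<q. \<Sum>k\<in>{j<..<q}.
       B j k (snd z) + real_of_int (snd z j - snd z k) * H (g (fst z) j - g (fst z) k)) \<partial>D)"
    unfolding risk_def by (intro Bochner_Integration.integral_cong refl Lo) (auto simp: sp)
  also have "\<dots> = (\<Sum>j<q. \<Sum>k\<in>{j<..<q}. \<integral>z. 
       B j k (snd z) + real_of_int (snd z j - snd z k) * H (g (fst z) j - g (fst z) k) \<partial>D)"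
  proof -
    have iF: "integrable D (\<lambda>z. B j k (snd z) + real_of_int (snd z j - snd z k) * H (g (fst z) j - g (fst z) k))"
      if "j < q" "k \<in> {j<..<q}" for j k
      using intB intY that by (intro Bochner_Integration.integrable_add) auto
    show ?thesis
      apply (subst Bochner_Integration.integral_sum)
       apply (intro Bochner_Integration.integrable_sum iF; simp)
      apply (intro sum.cong refl)
      apply (subst Bochner_Integration.integral_sum)
       apply (intro iF; simp)
      apply simp
      done
  qed
  also have "\<dots> = (\<Sum>j<q. \<Sum>k\<in>{j<..<q}. (\<integral>z. B j k (snd z) \<partial>D) +
       (\<integral>z. \<Delta> j k (fst z) * H (g (fst z) j - g (fst z) k) \<partial>D))"
  proof (intro sum.cong refl)
    fix j k assume j: "j \<in> {..<q}" and k: "k \<in> {j<..<q}"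
    then have jk: "j < q" "k < q" by auto
    have "\<exists>B. \<forall>x. \<bar>H (g x j - g x k)\<bar> \<le> B" using Hb by blast
    note e = Tr2[OF jk mh[OF jk] this]
    show "(\<integral>z. B j k (snd z) + real_of_int (snd z j - snd z k) * H (g (fst z) j - g (fst z) k) \<partial>D) =
      (\<integral>z. B j k (snd z) \<partial>D) + (\<integral>z. \<Delta> j k (fst z) * H (g (fst z) j - g (fst z) k) \<partial>D)"
      using intB intY[OF jk] e by simp
  qed
  finally show ?thesis by (simp add: sum.distrib)
qed



lemma phi_facts:
  fixes \<phi> :: "real \<Rightarrow> real"
  assumes bdd: "bdd_below (range \<phi>)"
    and dif: "\<And>t. \<phi> differentiable (at t)"
    and am: "antimono \<phi>"
    and d0: "deriv \<phi> 0 < 0"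
    and sym: "\<And>t. \<phi> t + \<phi> (- t) = 2 * \<phi> 0"
  defines "c \<equiv> \<phi> 0 - Inf (range \<phi>)"
  shows "c > 0" "\<And>d. -c/2 \<le> (\<phi> d - \<phi> 0)/2" "\<And>d. (\<phi> d - \<phi> 0)/2 \<le> c/2"
    "\<And>d. d \<ge> 0 \<Longrightarrow> (\<phi> d - \<phi> 0)/2 \<le> 0" "\<And>d. d \<le> 0 \<Longrightarrow> (\<phi> d - \<phi> 0)/2 \<ge> 0"
    "\<phi> \<in> borel_measurable borel"
    "\<And>a. a > 0 \<Longrightarrow> (\<lambda>n. (\<phi> (real n * a) - \<phi> 0)/2) \<longlonglongrightarrow> -c/2"
    "\<And>a. a < 0 \<Longrightarrow> (\<lambda>n. (\<phi> (real n * a) - \<phi> 0)/2) \<longlonglongrightarrow> c/2"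
proof -
  let ?I = "Inf (range \<phi>)"
  have ge: "\<phi> t \<ge> ?I" for t using bdd by (simp add: cInf_lower)
  have le: "\<phi> t \<le> 2 * \<phi> 0 - ?I" for t using ge[of "-t"] sym[of t] by linarith
  have "DERIV \<phi> 0 :> deriv \<phi> 0"
    using dif[of 0] by (simp add: DERIV_deriv_iff_real_differentiable)
  from DERIV_neg_dec_right[OF this d0] obtain d where "d > 0" "\<And>h. h > 0 \<Longrightarrow> h < d \<Longrightarrow> \<phi> 0 > \<phi> (0 + h)"
    by blast
  then have "\<phi> 0 > \<phi> (d/2)" by simp
  then show "c > 0" using ge[of "d/2"] by (simp add: c_def)
  show "\<And>d. -c/2 \<le> (\<phi> d - \<phi> 0)/2" using ge by (simp add: c_def)
  show "(\<phi> d - \<phi> 0)/2 \<le> c/2" for d using le[of d] unfolding c_def by (simp add: divide_right_mono)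
  show "\<And>d. d \<ge> 0 \<Longrightarrow> (\<phi> d - \<phi> 0)/2 \<le> 0" using am by (simp add: antimono_def)
  show "\<And>d. d \<le> 0 \<Longrightarrow> (\<phi> d - \<phi> 0)/2 \<ge> 0" using am by (simp add: antimono_def)
  have "continuous_on UNIV \<phi>"
    using dif by (intro differentiable_imp_continuous_on) (simp add: differentiable_on_def)
  then show "\<phi> \<in> borel_measurable borel" by (rule borel_measurable_continuous_onI)
  have lim: "(\<phi> \<longlongrightarrow> ?I) at_top"
  proof (rule order_tendstoI)
    fix a assume "a < ?I" then show "eventually (\<lambda>t. a < \<phi> t) at_top"
      using ge by (intro always_eventually allI) (auto intro: less_le_trans)
  next
    fix a assume "?I < a"
    then obtain t0 where "\<phi> t0 < a" using cInf_lessD[of "range \<phi>" a] by auto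
    then show "eventually (\<lambda>t. \<phi> t < a) at_top"
      using am unfolding eventually_at_top_linorder antimono_def
      by (intro exI[of _ t0]) (auto intro: le_less_trans)
  qed
  have lim2: "(\<lambda>n. \<phi> (real n * a)) \<longlonglongrightarrow> ?I" if "a > 0" for a
  proof -
    have "filterlim (\<lambda>n. real n * a) at_top sequentially"
      by (rule filterlim_tendsto_pos_mult_at_top[OF tendsto_const that filterlim_real_sequentially, THEN filterlim_cong[THEN iffD1, rotated 3]]) (auto simp: mult.commute)
    from filterlim_compose[OF lim this] show ?thesis .
  qed
  show "\<And>a. a > 0 \<Longrightarrow> (\<lambda>n. (\<phi> (real n * a) - \<phi> 0)/2) \<longlonglongrightarrow> -c/2"
  proof -
    fix a :: real assume "a > 0"
    from tendsto_divide[OF tendsto_diff[OF lim2[OF this] tendsto_const[of "\<phi> 0"]] tendsto_const[of 2]]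
    show "(\<lambda>n. (\<phi> (real n * a) - \<phi> 0)/2) \<longlonglongrightarrow> -c/2" by (simp add: c_def)
  qed
  show "\<And>a. a < 0 \<Longrightarrow> (\<lambda>n. (\<phi> (real n * a) - \<phi> 0)/2) \<longlonglongrightarrow> c/2"
  proof -
    fix a :: real assume "a < 0"
    then have "-a > 0" by simp
    from tendsto_divide[OF tendsto_diff[OF tendsto_const[of "\<phi> 0"] lim2[OF this]] tendsto_const[of 2]]
    have "(\<lambda>n. (\<phi> 0 - \<phi> (real n * - a))/2) \<longlonglongrightarrow> c/2" by (simp add: c_def)
    moreover have eq: "(\<phi> 0 - \<phi> (real n * - a))/2 = (\<phi> (real n * a) - \<phi> 0)/2" for n
      using sym[of "real n * a"] by (simp del: mult_minus_right add: field_simps)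
    ultimately show "(\<lambda>n. (\<phi> (real n * a) - \<phi> 0)/2) \<longlonglongrightarrow> c/2" by (simp only: eq)
  qed
qed



lemma pw:
  fixes a c d h :: real
  assumes "c > 0" "-c/2 \<le> h" "h \<le> c/2" "d > 0 \<Longrightarrow> h \<le> 0" "d < 0 \<Longrightarrow> h \<ge> 0" "d = 0 \<Longrightarrow> h = 0"
  shows "a * (- sgn d / 4) + \<bar>a\<bar> / 4 \<le> (a * h + c / 2 * \<bar>a\<bar>) / c"
proof -
  have f1: "a \<ge> 0 \<Longrightarrow> 0 \<le> a * h + a * c/2" using assms(2) mult_nonneg_nonneg[of a "h + c/2"] by (simp add: algebra_simps)
  have f2: "a \<le> 0 \<Longrightarrow> 0 \<le> a * h - a * c/2" using assms(3) mult_nonpos_nonpos[of a "h - c/2"] by (simp add: algebra_simps)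
  have f3: "a \<le> 0 \<Longrightarrow> h \<le> 0 \<Longrightarrow> 0 \<le> a * h" by (simp add: mult_nonpos_nonpos)
  have f4: "a \<ge> 0 \<Longrightarrow> h \<ge> 0 \<Longrightarrow> 0 \<le> a * h" by simp
  have "c * (a * (- sgn d / 4) + \<bar>a\<bar> / 4) \<le> a * h + c / 2 * \<bar>a\<bar>"
  proof -
    consider "d > 0" | "d < 0" | "d = 0" by linarith
    then show ?thesis
    proof cases
      case 1
      then have "h \<le> 0" using assms by simp
      then show ?thesis using 1 f1 f3 by (cases "a \<ge> 0") (auto simp: sgn_if algebra_simps)
    next
      case 2
      then have "h \<ge> 0" using assms by simp
      then show ?thesis using 2 f2 f4 by (cases "a \<ge> 0") (auto simp: sgn_if algebra_simps)
    next
      case 3 then show ?thesis using assms by (auto simp: sgn_if)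
    qed
  qed
  then show ?thesis using assms(1) by (simp add: pos_le_divide_eq mult.commute)
qed



theorem theorem5:
  fixes M :: "'x measure" and q :: nat and \<phi> :: "real \<Rightarrow> real"
  assumes "q \<ge> 2"
    and "bdd_below (range \<phi>)"
    and "\<And>t. \<phi> differentiable (at t)"
    and "antimono \<phi>"
    and "deriv \<phi> 0 < 0"
    and "\<And>t. \<phi> t + \<phi> (- t) = 2 * \<phi> 0"
  shows "\<exists>\<xi> :: real \<Rightarrow> real.
           (\<forall>t\<ge>0. \<xi> t \<ge> 0) \<and> mono_on {0..} \<xi> \<and> concave_on {0..} \<xi> \<and> \<xi> 0 = 0
         \<and> (\<xi> \<longlongrightarrow> 0) (at_right 0)
         \<and> (\<forall>D :: ('x \<times> (nat \<Rightarrow> int)) measure. \<forall>f.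
               prob_space D \<longrightarrow> sets D = sets (M \<Otimes>\<^sub>M count_space (label_space q)) \<longrightarrow>
               f \<in> scorers M q \<longrightarrow>
               risk D (rank_loss q) f - bayes_risk M q D (rank_loss q)
                 \<le> \<xi> (risk D (surr_loss \<phi> q) f - bayes_risk M q D (surr_loss \<phi> q)))"
proof -
  define c where "c = \<phi> 0 - Inf (range \<phi>)"
  note pf = phi_facts[OF assms(2-6), folded c_def]
  have c0: "c > 0" by (rule pf(1))
  define Hs where "Hs d = (\<phi> d - \<phi> 0)/2" for d
  define Hr where "Hr d = - sgn d / 4" for d :: real
  have Hs_lo: "-c/2 \<le> Hs d" for d using pf(2) by (simp add: Hs_def)
  have Hs_hi: "Hs d \<le> c/2" for d using pf(3) by (simp add: Hs_def)
  have Hs_abs: "\<bar>Hs d\<bar> \<le> c/2" for d using Hs_lo[of d] Hs_hi[of d] by linarith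
  have Hs_m: "Hs \<in> borel_measurable borel" unfolding Hs_def[abs_def] using pf(6) by simp
  have Hr_m: "Hr \<in> borel_measurable borel" unfolding Hr_def[abs_def] by simp
  have Hr_abs: "\<bar>Hr d\<bar> \<le> 1/4" for d by (simp add: Hr_def sgn_if)
  have scorers_ne: "(\<lambda>x j. 0) \<in> scorers M q" by (simp add: scorers_def)
  show ?thesis
  proof (intro exI[of _ "\<lambda>t. t / c"] conjI)
    show "\<forall>t\<ge>0. 0 \<le> t / c" using c0 by simp
    show "mono_on {0..} (\<lambda>t. t / c)" using c0 by (intro mono_onI) (simp add: divide_right_mono)
    show "concave_on {0..} (\<lambda>t. t / c)"
      using c0 by (intro concave_on_linorderI) (auto simp: add_divide_distrib[symmetric] diff_divide_distrib[symmetric] algebra_simps)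
    show "0 / c = 0" by simp
    show "((\<lambda>t. t / c) \<longlongrightarrow> 0) (at_right 0)"
      using c0 by (auto intro!: tendsto_eq_intros)
  next
    show "\<forall>D :: ('x \<times> (nat \<Rightarrow> int)) measure. \<forall>f.
               prob_space D \<longrightarrow> sets D = sets (M \<Otimes>\<^sub>M count_space (label_space q)) \<longrightarrow>
               f \<in> scorers M q \<longrightarrow>
               risk D (rank_loss q) f - bayes_risk M q D (rank_loss q)
                 \<le> (risk D (surr_loss \<phi> q) f - bayes_risk M q D (surr_loss \<phi> q)) / c"
    proof (intro allI impI)
    fix D :: "('x \<times> (nat \<Rightarrow> int)) measure" and f
    assume D: "prob_space D" and S: "sets D = sets (M \<Otimes>\<^sub>M count_space (label_space q))"
      and f: "f \<in> scorers M q"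
    interpret D: prob_space D by fact
    have mfst[measurable]: "fst \<in> measurable D M"
      by (subst measurable_cong_sets[OF S refl]) simp
    have mf: "F \<in> borel_measurable M \<Longrightarrow> (\<lambda>z. F (fst z)) \<in> borel_measurable D" for F :: "'x \<Rightarrow> real"
      using measurable_comp[OF mfst] by (simp add: o_def)
    have "\<forall>j. \<exists>\<eta>. j < q \<longrightarrow> (\<eta> \<in> borel_measurable M \<and> (\<forall>h \<in> borel_measurable M. (\<exists>B. \<forall>x. \<bar>h x\<bar> \<le> B) \<longrightarrow>
       integrable D (\<lambda>z. \<eta> (fst z) * h (fst z)) \<and>
       (\<integral>z. real_of_int (snd z j) * h (fst z) \<partial>D) = (\<integral>z. \<eta> (fst z) * h (fst z) \<partial>D)))"
    proof
      fix j show "\<exists>\<eta>. j < q \<longrightarrow> (\<eta> \<in> borel_measurable M \<and> (\<forall>h \<in> borel_measurable M. (\<exists>B. \<forall>x. \<bar>h x\<bar> \<le> B) \<longrightarrow>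
       integrable D (\<lambda>z. \<eta> (fst z) * h (fst z)) \<and>
       (\<integral>z. real_of_int (snd z j) * h (fst z) \<partial>D) = (\<integral>z. \<eta> (fst z) * h (fst z) \<partial>D)))"
      proof (cases "j < q")
        case True
        have "\<forall>y\<in>label_space q. y j = 1 \<or> y j = -1" using True by (auto simp: label_space_def)
        from transfer[OF D S this] show ?thesis by blast
      qed simp
    qed
    from choice[OF this] obtain \<eta> where \<eta>: "\<And>j. j < q \<Longrightarrow> \<eta> j \<in> borel_measurable M \<and> (\<forall>h \<in> borel_measurable M. (\<exists>B. \<forall>x. \<bar>h x\<bar> \<le> B) \<longrightarrow>
       integrable D (\<lambda>z. \<eta> j (fst z) * h (fst z)) \<and>
       (\<integral>z. real_of_int (snd z j) * h (fst z) \<partial>D) = (\<integral>z. \<eta> j (fst z) * h (fst z) \<partial>D))"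
      by blast
    define \<Delta> where "\<Delta> j k x = \<eta> j x - \<eta> k x" for j k x
    have m\<Delta>: "\<Delta> j k \<in> borel_measurable M" if "j < q" "k < q" for j k
      using \<eta>[OF that(1)] \<eta>[OF that(2)] unfolding \<Delta>_def[abs_def] by (intro borel_measurable_diff) auto
    have Tr1: "integrable D (\<lambda>z. \<Delta> j k (fst z) * h (fst z))"
      if "j < q" "k < q" "h \<in> borel_measurable M" "\<exists>B. \<forall>x. \<bar>h x\<bar> \<le> B" for j k h
    proof -
      have "integrable D (\<lambda>z. \<eta> j (fst z) * h (fst z) - \<eta> k (fst z) * h (fst z))"
        using \<eta>[OF that(1)] \<eta>[OF that(2)] that(3,4) by (intro Bochner_Integration.integrable_diff) auto
      then show ?thesis by (simp add: \<Delta>_def algebra_simps)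
    qed
    have Tr2: "(\<integral>z. real_of_int (snd z j - snd z k) * h (fst z) \<partial>D) = (\<integral>z. \<Delta> j k (fst z) * h (fst z) \<partial>D)"
      if "j < q" "k < q" "h \<in> borel_measurable M" "\<exists>B. \<forall>x. \<bar>h x\<bar> \<le> B" for j k h
    proof -
      note hyp = that
      have sp: "space D = space M \<times> label_space q"
        using sets_eq_imp_space_eq[OF S] by (simp add: space_pair_measure)
      have msnd[measurable]: "snd \<in> measurable D (count_space (label_space q))"
        by (subst measurable_cong_sets[OF S refl]) simp
      have ms: "(\<lambda>z. F (snd z)) \<in> borel_measurable D" for F :: "(nat \<Rightarrow> int) \<Rightarrow> real"
        using measurable_comp[OF msnd measurable_count_space_eq1[of F "label_space q" borel, THEN iffD2]] by (simp add: o_def)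
      obtain B where B: "\<And>x. \<bar>h x\<bar> \<le> B" using hyp(4) by auto
      have iy: "integrable D (\<lambda>z. real_of_int (snd z i) * h (fst z))" if "i < q" for i
      proof (rule D.integrable_const_bound[where B=B])
        show "AE z in D. norm (real_of_int (snd z i) * h (fst z)) \<le> B"
        proof (intro AE_I2)
          fix z assume "z \<in> space D"
          then have "snd z i = 1 \<or> snd z i = -1" using \<open>i < q\<close> by (auto simp: sp label_space_def)
          then show "norm (real_of_int (snd z i) * h (fst z)) \<le> B" using B[of "fst z"] by auto
        qed
        show "(\<lambda>z. real_of_int (snd z i) * h (fst z)) \<in> borel_measurable D"
          using ms[of "\<lambda>y. real_of_int (y i)"] mf[OF hyp(3)] by (intro borel_measurable_times) auto
      qed
      have "(\<integral>z. real_of_int (snd z j - snd z k) * h (fst z) \<partial>D) =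
          (\<integral>z. real_of_int (snd z j) * h (fst z) - real_of_int (snd z k) * h (fst z) \<partial>D)"
        by (simp add: algebra_simps)
      also have "\<dots> = (\<integral>z. real_of_int (snd z j) * h (fst z) \<partial>D) - (\<integral>z. real_of_int (snd z k) * h (fst z) \<partial>D)"
        using iy[OF hyp(1)] iy[OF hyp(2)] by simp
      also have "\<dots> = (\<integral>z. \<eta> j (fst z) * h (fst z) \<partial>D) - (\<integral>z. \<eta> k (fst z) * h (fst z) \<partial>D)"
        using \<eta>[OF hyp(1)] \<eta>[OF hyp(2)] hyp(3,4) by simp
      also have "\<dots> = (\<integral>z. \<eta> j (fst z) * h (fst z) - \<eta> k (fst z) * h (fst z) \<partial>D)"
        using \<eta>[OF hyp(1)] \<eta>[OF hyp(2)] hyp(3,4) by simp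
      also have "\<dots> = (\<integral>z. \<Delta> j k (fst z) * h (fst z) \<partial>D)"
        by (simp add: \<Delta>_def algebra_simps)
      finally show ?thesis .
    qed
    have TrA: "integrable D (\<lambda>z. \<bar>\<Delta> j k (fst z)\<bar>)" if "j < q" "k < q" for j k
    proof -
      have "(\<lambda>x. sgn (\<Delta> j k x)) \<in> borel_measurable M" using m\<Delta>[OF that] by simp
      moreover have "\<exists>B. \<forall>x. \<bar>sgn (\<Delta> j k x)\<bar> \<le> B" by (intro exI[of _ 1]) (simp add: sgn_if)
      ultimately have "integrable D (\<lambda>z. \<Delta> j k (fst z) * sgn (\<Delta> j k (fst z)))" by (rule Tr1[OF that])
      moreover have "\<And>r::real. r * sgn r = \<bar>r\<bar>" by (simp add: sgn_if)
      ultimately show ?thesis by simp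
    qed
    define E where "E j k = (\<integral>z. \<bar>\<Delta> j k (fst z)\<bar> \<partial>D)" for j k
    define Kr where "Kr = (\<Sum>j<q. \<Sum>k\<in>{j<..<q}. \<integral>z. (\<lambda>y. if y j \<noteq> y k then 1/2 else (0::real)) (snd z) \<partial>D)"
    define Ks where "Ks = (\<Sum>j<q. \<Sum>k\<in>{j<..<q}. \<integral>z. (\<lambda>y. if y j \<noteq> y k then \<phi> 0 else (0::real)) (snd z) \<partial>D)"
    have Rdec: "risk D (rank_loss q) g = Kr + (\<Sum>j<q. \<Sum>k\<in>{j<..<q}. \<integral>z. \<Delta> j k (fst z) * Hr (g (fst z) j - g (fst z) k) \<partial>D)"
      if "g \<in> scorers M q" for g
      unfolding Kr_def
      by (rule decomp[OF D S Tr2 Hr_m Hr_abs, where CB="1/2" and B="\<lambda>j k y. if y j \<noteq> y k then 1/2 else 0"])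
         (auto simp: rank_eq Hr_def that)
    have Sdec: "risk D (surr_loss \<phi> q) g = Ks + (\<Sum>j<q. \<Sum>k\<in>{j<..<q}. \<integral>z. \<Delta> j k (fst z) * Hs (g (fst z) j - g (fst z) k) \<partial>D)"
      if "g \<in> scorers M q" for g
      unfolding Ks_def
      by (rule decomp[OF D S Tr2 Hs_m Hs_abs, where CB="\<bar>\<phi> 0\<bar>" and B="\<lambda>j k y. if y j \<noteq> y k then \<phi> 0 else 0"])
         (auto simp: surr_eq[OF _ assms(6)] Hs_def that)
    show "risk D (rank_loss q) f - bayes_risk M q D (rank_loss q)
                 \<le> (risk D (surr_loss \<phi> q) f - bayes_risk M q D (surr_loss \<phi> q)) / c"
    proof -
    have hm: "(\<lambda>x. H (g x j - g x k)) \<in> borel_measurable M"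
      if "g \<in> scorers M q" "j < q" "k < q" "H \<in> borel_measurable borel" for g j k and H :: "real \<Rightarrow> real"
    proof -
      have "(\<lambda>x. g x j) \<in> borel_measurable M" "(\<lambda>x. g x k) \<in> borel_measurable M"
        using that by (auto simp: scorers_def)
      from measurable_compose[OF borel_measurable_diff[OF this] that(4)] show ?thesis .
    qed
    have PL: "-(C * E j k) \<le> (\<integral>z. \<Delta> j k (fst z) * H (g (fst z) j - g (fst z) k) \<partial>D)"
      if "g \<in> scorers M q" "j < q" "k < q" "H \<in> borel_measurable borel" "\<And>d. \<bar>H d\<bar> \<le> C" for g j k C H
    proof -
      have "(\<integral>z. -(C * \<bar>\<Delta> j k (fst z)\<bar>) \<partial>D) \<le> (\<integral>z. \<Delta> j k (fst z) * H (g (fst z) j - g (fst z) k) \<partial>D)"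
      proof (rule integral_mono)
        show "integrable D (\<lambda>z. -(C * \<bar>\<Delta> j k (fst z)\<bar>))" using TrA[OF that(2,3)] by simp
        show "integrable D (\<lambda>z. \<Delta> j k (fst z) * H (g (fst z) j - g (fst z) k))"
          using Tr1[OF that(2,3) hm[OF that(1-4)]] that(5) by blast
        fix z
        have "\<bar>\<Delta> j k (fst z) * H (g (fst z) j - g (fst z) k)\<bar> \<le> \<bar>\<Delta> j k (fst z)\<bar> * C"
          unfolding abs_mult by (intro mult_left_mono that(5)) simp
        then show "-(C * \<bar>\<Delta> j k (fst z)\<bar>) \<le> \<Delta> j k (fst z) * H (g (fst z) j - g (fst z) k)"
          by (simp add: abs_le_iff mult.commute)
      qed
      then show ?thesis by (simp add: E_def)
    qed
    have Rlow: "Kr + (\<Sum>j<q. \<Sum>k\<in>{j<..<q}. -(1/4 * E j k)) \<le> risk D (rank_loss q) g"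
      if "g \<in> scorers M q" for g
      unfolding Rdec[OF that]
      by (intro add_left_mono sum_mono PL[OF that _ _ Hr_m Hr_abs]) auto
    have Slow: "Ks + (\<Sum>j<q. \<Sum>k\<in>{j<..<q}. -(c/2 * E j k)) \<le> risk D (surr_loss \<phi> q) g"
      if "g \<in> scorers M q" for g
      unfolding Sdec[OF that]
      by (intro add_left_mono sum_mono PL[OF that _ _ Hs_m Hs_abs]) auto
    have BR: "Kr + (\<Sum>j<q. \<Sum>k\<in>{j<..<q}. -(1/4 * E j k)) \<le> bayes_risk M q D (rank_loss q)"
      unfolding bayes_risk_def using scorers_ne Rlow by (intro cINF_greatest) auto
    have BS: "bayes_risk M q D (surr_loss \<phi> q) \<le> Ks + (\<Sum>j<q. \<Sum>k\<in>{j<..<q}. -(c/2 * E j k))"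
    proof -
      define gn where "gn n = (\<lambda>x j. real n * \<eta> j x)" for n :: nat
      have gs: "gn n \<in> scorers M q" for n
        using \<eta> by (auto simp: gn_def scorers_def intro!: borel_measurable_times)
      have req: "risk D (surr_loss \<phi> q) (gn n) = Ks + (\<Sum>j<q. \<Sum>k\<in>{j<..<q}. \<integral>z. \<Delta> j k (fst z) * Hs (real n * \<Delta> j k (fst z)) \<partial>D)" for n
        unfolding Sdec[OF gs] by (simp add: gn_def \<Delta>_def right_diff_distrib)
      have plim: "(\<lambda>n. \<integral>z. \<Delta> j k (fst z) * Hs (real n * \<Delta> j k (fst z)) \<partial>D) \<longlonglongrightarrow> -(c/2 * E j k)"
        if "j < q" "k < q" for j k
      proof -
        have "(\<lambda>n. \<integral>z. \<Delta> j k (fst z) * Hs (real n * \<Delta> j k (fst z)) \<partial>D) \<longlonglongrightarrow> (\<integral>z. -(c/2 * \<bar>\<Delta> j k (fst z)\<bar>) \<partial>D)"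
        proof (rule integral_dominated_convergence[where w="\<lambda>z. c/2 * \<bar>\<Delta> j k (fst z)\<bar>"])
          show "(\<lambda>z. -(c/2 * \<bar>\<Delta> j k (fst z)\<bar>)) \<in> borel_measurable D"
            using mf[OF m\<Delta>[OF that]] by simp
          show "(\<lambda>z. \<Delta> j k (fst z) * Hs (real n * \<Delta> j k (fst z))) \<in> borel_measurable D" for n
          proof -
            have "(\<lambda>x. \<Delta> j k x * Hs (real n * \<Delta> j k x)) \<in> borel_measurable M"
              using m\<Delta>[OF that] Hs_m
              by (intro borel_measurable_times measurable_compose[OF _ Hs_m] borel_measurable_const) auto
            from mf[OF this] show ?thesis .
          qed
          show "integrable D (\<lambda>z. c/2 * \<bar>\<Delta> j k (fst z)\<bar>)" using TrA[OF that] by simp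
          show "AE z in D. (\<lambda>n. \<Delta> j k (fst z) * Hs (real n * \<Delta> j k (fst z))) \<longlonglongrightarrow> -(c/2 * \<bar>\<Delta> j k (fst z)\<bar>)"
          proof (intro AE_I2)
            fix z
            define a where "a = \<Delta> j k (fst z)"
            have "(\<lambda>n. a * Hs (real n * a)) \<longlonglongrightarrow> -(c/2 * \<bar>a\<bar>)"
            proof -
              consider "a > 0" | "a < 0" | "a = 0" by linarith
              then show ?thesis
              proof cases
                case 1
                from tendsto_mult_left[OF pf(7)[OF 1], of a] 1 show ?thesis by (simp add: Hs_def mult.commute)
              next
                case 2
                from tendsto_mult_left[OF pf(8)[OF 2], of a] 2 show ?thesis by (simp add: Hs_def mult.commute)
              next
                case 3 then show ?thesis by simp
              qed
            qed
            then show "(\<lambda>n. \<Delta> j k (fst z) * Hs (real n * \<Delta> j k (fst z))) \<longlonglongrightarrow> -(c/2 * \<bar>\<Delta> j k (fst z)\<bar>)"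
              by (simp add: a_def)
          qed
          show "AE z in D. norm (\<Delta> j k (fst z) * Hs (real n * \<Delta> j k (fst z))) \<le> c/2 * \<bar>\<Delta> j k (fst z)\<bar>" for n
          proof (intro AE_I2)
            fix z
            have "\<bar>\<Delta> j k (fst z)\<bar> * \<bar>Hs (real n * \<Delta> j k (fst z))\<bar> \<le> \<bar>\<Delta> j k (fst z)\<bar> * (c/2)"
              by (intro mult_left_mono Hs_abs) simp
            then show "norm (\<Delta> j k (fst z) * Hs (real n * \<Delta> j k (fst z))) \<le> c/2 * \<bar>\<Delta> j k (fst z)\<bar>"
              by (simp add: abs_mult mult.commute)
          qed
        qed
        then show ?thesis by (simp add: E_def)
      qed
      have lim: "(\<lambda>n. risk D (surr_loss \<phi> q) (gn n)) \<longlonglongrightarrow> Ks + (\<Sum>j<q. \<Sum>k\<in>{j<..<q}. -(c/2 * E j k))"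
        unfolding req by (intro tendsto_add tendsto_const tendsto_sum plim) auto
      have bdd: "bdd_below ((\<lambda>g. risk D (surr_loss \<phi> q) g) ` scorers M q)"
        by (rule bdd_belowI2[OF Slow])
      show ?thesis
      proof (rule LIMSEQ_le_const[OF lim], intro exI allI impI)
        fix n :: nat
        show "bayes_risk M q D (surr_loss \<phi> q) \<le> risk D (surr_loss \<phi> q) (gn n)"
          unfolding bayes_risk_def by (rule cINF_lower[OF bdd gs])
      qed
    qed
    have PW: "(\<integral>z. \<Delta> j k (fst z) * Hr (f (fst z) j - f (fst z) k) \<partial>D) + 1/4 * E j k \<le>
        ((\<integral>z. \<Delta> j k (fst z) * Hs (f (fst z) j - f (fst z) k) \<partial>D) + c/2 * E j k) / c"
      if "j < q" "k < q" for j k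
    proof -
      have i1: "integrable D (\<lambda>z. \<Delta> j k (fst z) * Hr (f (fst z) j - f (fst z) k))"
        using Tr1[OF that hm[OF f that Hr_m]] Hr_abs by blast
      have i2: "integrable D (\<lambda>z. \<Delta> j k (fst z) * Hs (f (fst z) j - f (fst z) k))"
        using Tr1[OF that hm[OF f that Hs_m]] Hs_abs by blast
      have i3: "integrable D (\<lambda>z. \<bar>\<Delta> j k (fst z)\<bar>)" by (rule TrA[OF that])
      have "(\<integral>z. \<Delta> j k (fst z) * Hr (f (fst z) j - f (fst z) k) + \<bar>\<Delta> j k (fst z)\<bar> / 4 \<partial>D) \<le>
            (\<integral>z. (\<Delta> j k (fst z) * Hs (f (fst z) j - f (fst z) k) + c / 2 * \<bar>\<Delta> j k (fst z)\<bar>) / c \<partial>D)"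
      proof (rule integral_mono)
        show "integrable D (\<lambda>z. \<Delta> j k (fst z) * Hr (f (fst z) j - f (fst z) k) + \<bar>\<Delta> j k (fst z)\<bar> / 4)"
          using i1 i3 by simp
        show "integrable D (\<lambda>z. (\<Delta> j k (fst z) * Hs (f (fst z) j - f (fst z) k) + c / 2 * \<bar>\<Delta> j k (fst z)\<bar>) / c)"
          using i2 i3 by simp
        fix z
        define d where "d = f (fst z) j - f (fst z) k"
        have "\<Delta> j k (fst z) * (- sgn d / 4) + \<bar>\<Delta> j k (fst z)\<bar> / 4 \<le> (\<Delta> j k (fst z) * Hs d + c / 2 * \<bar>\<Delta> j k (fst z)\<bar>) / c"
        proof (rule pw[OF c0 Hs_lo Hs_hi])
          show "d > 0 \<Longrightarrow> Hs d \<le> 0" using pf(4)[of d] by (simp add: Hs_def)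
          show "d < 0 \<Longrightarrow> Hs d \<ge> 0" using pf(5)[of d] by (simp add: Hs_def)
          show "d = 0 \<Longrightarrow> Hs d = 0" by (simp add: Hs_def)
        qed
        then show "\<Delta> j k (fst z) * Hr (f (fst z) j - f (fst z) k) + \<bar>\<Delta> j k (fst z)\<bar> / 4 \<le>
            (\<Delta> j k (fst z) * Hs (f (fst z) j - f (fst z) k) + c / 2 * \<bar>\<Delta> j k (fst z)\<bar>) / c"
          by (simp add: d_def Hr_def)
      qed
      then show ?thesis using i1 i2 i3 by (simp add: E_def)
    qed
    have "risk D (rank_loss q) f - bayes_risk M q D (rank_loss q) \<le>
       (\<Sum>j<q. \<Sum>k\<in>{j<..<q}. (\<integral>z. \<Delta> j k (fst z) * Hr (f (fst z) j - f (fst z) k) \<partial>D) + 1/4 * E j k)"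
      using BR unfolding Rdec[OF f] by (simp add: sum.distrib sum_negf)
    also have "\<dots> \<le> (\<Sum>j<q. \<Sum>k\<in>{j<..<q}. ((\<integral>z. \<Delta> j k (fst z) * Hs (f (fst z) j - f (fst z) k) \<partial>D) + c/2 * E j k) / c)"
      by (intro sum_mono PW) auto
    also have "\<dots> = (\<Sum>j<q. \<Sum>k\<in>{j<..<q}. (\<integral>z. \<Delta> j k (fst z) * Hs (f (fst z) j - f (fst z) k) \<partial>D) + c/2 * E j k) / c"
      by (simp add: sum_divide_distrib)
    also have "\<dots> \<le> (risk D (surr_loss \<phi> q) f - bayes_risk M q D (surr_loss \<phi> q)) / c"
      using BS c0 unfolding Sdec[OF f] by (intro divide_right_mono) (auto simp: sum.distrib sum_negf)
    finally show ?thesis .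
  qed
  qed
  qed
qed


end
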